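(* There exists a Knuth-closed set $S\subseteq S_n$ with $|S|=p$ and $\iota_n,\delta_n\notin S$ if and only if $$p\in\sum_{\lambda\vdash n,\ \lambda\ne(1^n),\ \lambda\ne(n)} f^\lambda\{0,f^\lambda\}.$$
   Context: Under the Robinson–Schensted correspondence each $w\in S_n$ maps to a pair $(P,Q)$ of standard Young tableaux of the same shape. For a standard Young tableau $P$ of size $n$, the Knuth class $K(P)$ is the set of $w\in S_n$ whose image is $(P,Q)$ for some $Q$. A set is Knuth-closed if it is a union of Knuth classes. $f^\lambda$ is the number of standard Young tableaux of shape $\lambda$. For $A,B\subseteq\mathbb Z$, $A+B=\{a+b:a\in A,b\in B\}$, $cA$ denotes the sum of $c$ copies of $A$, and $\sum$ of sets denotes iterated sumset. $\iota_n=12\cdots n$, $\delta_n=n\cdots21$. *)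

theory Defs
  imports Main
begin

text \<open>Permutations of S_n in one-line notation: lists w = w_1 ... w_n.\<close>
definition perms :: "nat \<Rightarrow> nat list set" where
  "perms n = {w. distinct w \<and> set w = {1..n}}"

definition iota :: "nat \<Rightarrow> nat list" where
  "iota n = [1..<Suc n]"

definition delta :: "nat \<Rightarrow> nat list" where
  "delta n = rev [1..<Suc n]"

text \<open>Tableaux as lists of rows (top row first, English convention).\<close>
type_synonym tableau = "nat list list"

definition is_partition :: "nat \<Rightarrow> nat list \<Rightarrow> bool" where
  "is_partition n lam \<longleftrightarrow> sorted_wrt (\<ge>) lam \<and> 0 \<notin> set lam \<and> sum_list lam = n"

definition shape :: "tableau \<Rightarrow> nat list" where
  "shape T = map length T"

definition is_SYT :: "nat \<Rightarrow> tableau \<Rightarrow> bool" where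
  "is_SYT n T \<longleftrightarrow>
     is_partition n (shape T) \<and>
     distinct (concat T) \<and> set (concat T) = {1..n} \<and>
     (\<forall>r\<in>set T. sorted_wrt (<) r) \<and>
     (\<forall>i j. Suc i < length T \<and> j < length (T ! Suc i) \<longrightarrow> T ! i ! j < T ! Suc i ! j)"

definition flam :: "nat list \<Rightarrow> nat" where
  "flam lam = card {T. is_SYT (sum_list lam) T \<and> shape T = lam}"

fun row_ins :: "nat list \<Rightarrow> nat \<Rightarrow> nat list \<times> nat option" where
  "row_ins [] x = ([x], None)"
| "row_ins (y # ys) x =
     (if x < y then (x # ys, Some y)
      else (let (ys', b) = row_ins ys x in (y # ys', b)))"

text \<open>Insertion into a tableau; also returns the index of the row where a new cell was created.\<close>
fun ins :: "tableau \<Rightarrow> nat \<Rightarrow> tableau \<times> nat" where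
  "ins [] x = ([[x]], 0)"
| "ins (r # rs) x =
     (case row_ins r x of
        (r', None) \<Rightarrow> (r' # rs, 0)
      | (r', Some y) \<Rightarrow> (let (rs', i) = ins rs y in (r' # rs', Suc i)))"

definition add_at :: "tableau \<Rightarrow> nat \<Rightarrow> nat \<Rightarrow> tableau" where
  "add_at Q i k = (if i < length Q then Q[i := Q ! i @ [k]] else Q @ [[k]])"

fun rs_go :: "nat list \<Rightarrow> tableau \<times> tableau \<Rightarrow> nat \<Rightarrow> tableau \<times> tableau" where
  "rs_go [] PQ k = PQ"
| "rs_go (x # xs) (P, Q) k =
     (let (P', i) = ins P x in rs_go xs (P', add_at Q i k) (Suc k))"

definition RS :: "nat list \<Rightarrow> tableau \<times> tableau" where
  "RS w = rs_go w ([], []) 1"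

definition knuth_class :: "nat \<Rightarrow> tableau \<Rightarrow> nat list set" where
  "knuth_class n P = {w \<in> perms n. \<exists>Q. RS w = (P, Q)}"

definition knuth_closed :: "nat \<Rightarrow> nat list set \<Rightarrow> bool" where
  "knuth_closed n S \<longleftrightarrow>
     (\<exists>\<P>. (\<forall>P\<in>\<P>. is_SYT n P) \<and> S = (\<Union>P\<in>\<P>. knuth_class n P))"

definition sumset_over :: "'i set \<Rightarrow> ('i \<Rightarrow> nat set) \<Rightarrow> nat set" where
  "sumset_over I A = {(\<Sum>i\<in>I. a i) | a. \<forall>i\<in>I. a i \<in> A i}"

definition nfold :: "nat \<Rightarrow> nat set \<Rightarrow> nat set" where
  "nfold c A = sumset_over {..<c} (\<lambda>_. A)"

end

theory Submission
  imports Defs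
begin


definition cnt :: "nat list \<Rightarrow> nat \<Rightarrow> nat" where
  "cnt r x = length (filter (\<lambda>z. z < x) r)"

lemma filter_takeWhile_sorted:
  "sorted_wrt (<) (r::nat list) \<Longrightarrow> filter (\<lambda>z. z < x) r = takeWhile (\<lambda>z. z < x) r"
proof (induction r)
  case Nil then show ?case by simp
next
  case (Cons y ys)
  show ?case
  proof (cases "y < x")
    case True then show ?thesis using Cons by simp
  next
    case False
    have "\<forall>z\<in>set ys. \<not> z < x"
    proof
      fix z assume "z \<in> set ys"
      then have "y < z" using Cons.prems by simp
      then show "\<not> z < x" using False by simp
    qed
    then show ?thesis using False by (simp add: filter_empty_conv)
  qed
qed

lemma cnt_le: "cnt r x \<le> length r"
  unfolding cnt_def by simp

lemma cnt_lt: "sorted_wrt (<) r \<Longrightarrow> j < cnt r x \<Longrightarrow> r ! j < x"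
  unfolding cnt_def filter_takeWhile_sorted
  by (metis takeWhile_nth nth_mem set_takeWhileD)

lemma cnt_ge: "sorted_wrt (<) r \<Longrightarrow> cnt r x \<le> j \<Longrightarrow> j < length r \<Longrightarrow> x \<le> r ! j"
proof -
  assume s: "sorted_wrt (<) r" and a: "cnt r x \<le> j" "j < length r"
  then have c: "cnt r x < length r" by simp
  have "\<not> r ! cnt r x < x"
    using nth_length_takeWhile[of "\<lambda>z. z<x" r] c s by (simp add: cnt_def filter_takeWhile_sorted)
  moreover have "r ! cnt r x \<le> r ! j"
  proof (cases "cnt r x = j")
    case False
    then have "cnt r x < j" using a by simp
    then show ?thesis using s a by (simp add: sorted_wrt_iff_nth_less less_imp_le)
  qed simp
  ultimately show ?thesis by simp
qed

lemma cnt_unique: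
  assumes "sorted_wrt (<) r" "c \<le> length r" "\<forall>j<c. r!j < x" "\<forall>j. c \<le> j \<and> j < length r \<longrightarrow> x \<le> r!j"
  shows "cnt r x = c"
proof -
  have e: "r = take c r @ drop c r" by simp
  have 1: "filter (\<lambda>z. z<x) (take c r) = take c r" using assms(2,3)
    by (auto simp: filter_id_conv in_set_conv_nth)
  have 2: "filter (\<lambda>z. z<x) (drop c r) = []"
  proof -
    have "\<And>i. i < length r - c \<Longrightarrow> x \<le> r ! (c + i)" using assms(2,4) by simp
    then show ?thesis by (auto simp: filter_empty_conv in_set_conv_nth) (meson leD)
  qed
  have "cnt r x = length (filter (\<lambda>z. z<x) (take c r)) + length (filter (\<lambda>z. z<x) (drop c r))"
    unfolding cnt_def by (metis append_take_drop_id filter_append length_append)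
  then show ?thesis using 1 2 assms(2) by simp
qed

lemma cnt_Cons: "cnt (y # ys) x = (if y < x then Suc (cnt ys x) else cnt ys x)"
  unfolding cnt_def by simp

lemma row_ins_char:
  "sorted_wrt (<) r \<Longrightarrow> x \<notin> set r \<Longrightarrow>
   row_ins r x = (if cnt r x = length r then (r @ [x], None) else (r[cnt r x := x], Some (r ! cnt r x)))"
proof (induction r)
  case Nil then show ?case by (simp add: cnt_def)
next
  case (Cons y ys)
  show ?case
  proof (cases "x < y")
    case True
    then have "cnt (y#ys) x = 0" using Cons.prems unfolding cnt_def
      by (auto simp: filter_empty_conv)
    then show ?thesis using True by simp
  next
    case False
    then have "y < x" using Cons.prems by auto
    then show ?thesis using Cons False by (auto simp: cnt_Cons split: prod.splits)
  qed
qed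

lemma row_ins_all_less: "\<forall>z\<in>set r. z < x \<Longrightarrow> row_ins r x = (r @ [x], None)"
  by (induction r) auto

definition row_del :: "nat list \<Rightarrow> nat \<Rightarrow> nat list \<times> nat" where
  "row_del r y = (let c = cnt r y in (r[c - 1 := y], r ! (c - 1)))"

lemma sorted_upd:
  assumes s: "sorted_wrt (<) r" and c: "c < length r"
    and lo: "\<forall>j<c. r!j < x" and hi: "\<forall>j. c < j \<and> j < length r \<longrightarrow> x < r!j"
  shows "sorted_wrt (<) (r[c := x])"
  unfolding sorted_wrt_iff_nth_less
proof (intro allI impI)
  fix i j assume ij: "i < j" "j < length (r[c := x])"
  show "r[c := x] ! i < r[c := x] ! j"
    using ij s c lo hi by (auto simp: nth_list_update sorted_wrt_iff_nth_less)
qed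

lemma sorted_snoc_less: "sorted_wrt (<) r \<Longrightarrow> \<forall>z\<in>set r. z < x \<Longrightarrow> sorted_wrt (<) (r @ [x])"
  by (simp add: sorted_wrt_append)

lemma ins_row_facts:
  assumes s: "sorted_wrt (<) r" and x: "x \<notin> set r" and c: "cnt r x < length r"
  shows "x < r ! cnt r x" "sorted_wrt (<) (r[cnt r x := x])"
    "row_del (r[cnt r x := x]) (r ! cnt r x) = (r, x)"
proof -
  let ?c = "cnt r x"
  have ge: "x \<le> r ! ?c" using cnt_ge[OF s] c by simp
  moreover have "r ! ?c \<noteq> x" using x c by (metis nth_mem)
  ultimately show xl: "x < r ! ?c" by simp
  have lo: "\<forall>j<?c. r!j < x" using cnt_lt[OF s] by blast
  have hi: "\<forall>j. ?c < j \<and> j < length r \<longrightarrow> x < r!j"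
    using s xl by (metis order.strict_trans sorted_wrt_nth_less)
  show ss: "sorted_wrt (<) (r[?c := x])" using sorted_upd[OF s c lo hi] .
  let ?r' = "r[?c := x]" and ?y = "r ! ?c"
  have "cnt ?r' ?y = Suc ?c"
  proof (rule cnt_unique[OF ss])
    show "Suc ?c \<le> length ?r'" using c by simp
    show "\<forall>j<Suc ?c. ?r' ! j < ?y" using lo xl c
      by (auto simp: nth_list_update less_Suc_eq)
    show "\<forall>j. Suc ?c \<le> j \<and> j < length ?r' \<longrightarrow> ?y \<le> ?r' ! j"
      using s by (auto simp: nth_list_update sorted_wrt_iff_nth_less intro: order.strict_implies_order)
  qed
  then show "row_del ?r' ?y = (r, x)" unfolding row_del_def using c by simp
qed



definition hdn :: "tableau \<Rightarrow> nat list" where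
  "hdn T = (case T of [] \<Rightarrow> [] | r # _ \<Rightarrow> r)"

lemma hdn_simps[simp]: "hdn [] = []" "hdn (r # rs) = r"
  by (simp_all add: hdn_def)

definition rowpair :: "nat list \<Rightarrow> nat list \<Rightarrow> bool" where
  "rowpair r s \<longleftrightarrow> length s \<le> length r \<and> (\<forall>j<length s. r ! j < s ! j)"

lemma rowpair_Nil[simp]: "rowpair r []"
  by (simp add: rowpair_def)

fun tabl :: "tableau \<Rightarrow> bool" where
  "tabl [] = True"
| "tabl (r # rs) = (r \<noteq> [] \<and> sorted_wrt (<) r \<and> rowpair r (hdn rs) \<and> tabl rs)"

definition corner :: "tableau \<Rightarrow> nat \<Rightarrow> bool" where
  "corner T i \<longleftrightarrow> i < length T \<and> length (hdn (drop (Suc i) T)) < length (T ! i)"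

lemma corner_simps[simp]:
  "\<not> corner [] i"
  "corner (r # rs) 0 \<longleftrightarrow> length (hdn rs) < length r"
  "corner (r # rs) (Suc i) \<longleftrightarrow> corner rs i"
  by (auto simp: corner_def)

lemma add_at_simps[simp]:
  "add_at [] i k = [[k]]"
  "add_at (r # rs) 0 k = (r @ [k]) # rs"
  "add_at (r # rs) (Suc i) k = r # add_at rs i k"
  by (auto simp: add_at_def)

lemma map_length_add_at: "map length (add_at T i a) = map length (add_at T i b)"
proof (induction T arbitrary: i)
  case Nil then show ?case by simp
next
  case (Cons r rs) then show ?case by (cases i) auto
qed

lemma tabl_hdn_sorted: "tabl T \<Longrightarrow> sorted_wrt (<) (hdn T)"
  by (cases T) auto

lemma rowpair_snoc: "rowpair r s \<Longrightarrow> rowpair (r @ [x]) s"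
  by (auto simp: rowpair_def nth_append)

lemma ins_pair:
  assumes rp: "rowpair r s" and sr: "sorted_wrt (<) r" and ss: "sorted_wrt (<) s"
    and x: "x \<notin> set r" and c: "cnt r x < length r" and ys: "r ! cnt r x \<notin> set s"
  shows "rowpair (r[cnt r x := x]) (fst (row_ins s (r ! cnt r x)))"
proof -
  define c where "c = cnt r x"
  define y where "y = r ! c"
  define d where "d = cnt s y"
  have c': "c < length r" using c c_def by simp
  have xy: "x < y" using ins_row_facts(1)[OF sr x c] c_def y_def by simp
  have rlo: "\<And>j. j < c \<Longrightarrow> r ! j < y" using sr c' y_def by (simp add: sorted_wrt_iff_nth_less)
  have rp1: "length s \<le> length r" and rp2: "\<And>j. j < length s \<Longrightarrow> r ! j < s ! j"
    using rp by (auto simp: rowpair_def)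
  have dc: "d \<le> c"
  proof (rule ccontr)
    assume "\<not> d \<le> c"
    then have cd: "c < d" by simp
    then have "c < length s" using cnt_le[of s y] d_def by simp
    then have "y < s ! c" using rp2 y_def by simp
    moreover have "s ! c < y" using cnt_lt[OF ss cd[unfolded d_def]] .
    ultimately show False by simp
  qed
  have dle: "d \<le> length s" using cnt_le d_def by simp
  have ri: "row_ins s y = (if d = length s then (s @ [y], None) else (s[d := y], Some (s ! d)))"
    using row_ins_char[OF ss] ys y_def c_def d_def by simp
  show ?thesis
  proof (cases "d = length s")
    case True
    then have e: "fst (row_ins s y) = s @ [y]" using ri by simp
    have "rowpair (r[c := x]) (s @ [y])"
      unfolding rowpair_def
    proof (intro conjI allI impI)
      show "length (s @ [y]) \<le> length (r[c := x])" using True dc c' by simp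
      fix j assume j: "j < length (s @ [y])"
      show "r[c := x] ! j < (s @ [y]) ! j"
      proof (cases "j < length s")
        case True
        then have "j \<noteq> c" using dc \<open>d = length s\<close> by simp
        then show ?thesis using True rp2 by (simp add: nth_append)
      next
        case False
        then have jd: "j = d" using j \<open>d = length s\<close> by simp
        show ?thesis
        proof (cases "d = c")
          case True then show ?thesis using jd xy c' \<open>d = length s\<close> by (simp add: nth_append)
        next
          case False then have "d < c" using dc by simp
          then show ?thesis using jd rlo \<open>d = length s\<close> by (simp add: nth_append)
        qed
      qed
    qed
    then show ?thesis using e c_def y_def by simp
  next
    case False
    then have dl: "d < length s" using dle by simp
    then have e: "fst (row_ins s y) = s[d := y]" using ri by simp
    have "rowpair (r[c := x]) (s[d := y])"
      unfolding rowpair_def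
    proof (intro conjI allI impI)
      show "length (s[d := y]) \<le> length (r[c := x])" using rp1 by simp
      fix j assume j: "j < length (s[d := y])"
      show "r[c := x] ! j < s[d := y] ! j"
      proof (cases "j = d")
        case True
        show ?thesis
        proof (cases "d = c")
          case True then show ?thesis using \<open>j = d\<close> xy c' dl by simp
        next
          case False then have "d < c" using dc by simp
          then show ?thesis using \<open>j = d\<close> rlo dl by simp
        qed
      next
        case False
        show ?thesis
        proof (cases "j = c")
          case True
          then have "x < s ! j" using xy rp2[of j] j y_def by simp
          then show ?thesis using True False c' j by simp
        next
          case False
          then show ?thesis using \<open>j \<noteq> d\<close> rp2 j by simp
        qed
      qed
    qed
    then show ?thesis using e c_def y_def by simp
  qed
qed

fun del_from :: "tableau \<Rightarrow> nat \<Rightarrow> tableau \<times> nat" where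
  "del_from [] i = ([], 0)"
| "del_from (r # rs) 0 = (if length r \<le> 1 then rs else butlast r # rs, last r)"
| "del_from (r # rs) (Suc i) = (let (rs', y) = del_from rs i; (r', z) = row_del r y in (r' # rs', z))"

lemma ins_props:
  "tabl P \<Longrightarrow> distinct (concat P) \<Longrightarrow> x \<notin> set (concat P) \<Longrightarrow> ins P x = (P', i) \<Longrightarrow>
   tabl P' \<and> set (concat P') = insert x (set (concat P)) \<and> corner P' i \<and> i \<le> length P \<and>
   map length P' = map length (add_at P i x) \<and> del_from P' i = (P, x) \<and>
   hdn P' = fst (row_ins (hdn P) x)"
proof (induction P arbitrary: x P' i)
  case Nil
  then show ?case by auto
next
  case (Cons r rs)
  have r: "r \<noteq> []" "sorted_wrt (<) r" "rowpair r (hdn rs)" "tabl rs" using Cons.prems(1) by auto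
  have xr: "x \<notin> set r" using Cons.prems(3) by simp
  have ri: "row_ins r x = (if cnt r x = length r then (r @ [x], None) else (r[cnt r x := x], Some (r ! cnt r x)))"
    using row_ins_char[OF r(2) xr] .
  show ?case
  proof (cases "cnt r x = length r")
    case True
    then have ri': "row_ins r x = (r @ [x], None)" using ri by simp
    then have PP: "P' = (r @ [x]) # rs" "i = 0" using Cons.prems(4) by auto
    have lt: "\<forall>z\<in>set r. z < x" using cnt_lt[OF r(2)] True by (metis in_set_conv_nth)
    have "tabl P'" using PP r lt by (simp add: sorted_snoc_less rowpair_snoc)
    moreover have "corner P' i" using PP r(3) by (simp add: rowpair_def)
    moreover have "del_from P' i = (r # rs, x)" using PP r(1) by simp
    ultimately show ?thesis using PP ri' by simp
  next
    case False
    then have c: "cnt r x < length r" using cnt_le[of r x] by simp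
    define y where "y = r ! cnt r x"
    define r' where "r' = r[cnt r x := x]"
    obtain rs' i0 where insrs: "ins rs y = (rs', i0)" by fastforce
    have ri': "row_ins r x = (r', Some y)" using ri False r'_def y_def by simp
    then have PP: "P' = r' # rs'" "i = Suc i0" using Cons.prems(4) insrs by auto
    have yr: "y \<in> set r" using c y_def by simp
    have drs: "distinct (concat rs)" using Cons.prems(2) by simp
    have yrs: "y \<notin> set (concat rs)" using Cons.prems(2) yr by auto
    note IH = Cons.IH[OF r(4) drs yrs insrs]
    have fr: "x < y" "sorted_wrt (<) r'" "row_del r' y = (r, x)"
      using ins_row_facts[OF r(2) xr c] y_def r'_def by auto
    have yh: "y \<notin> set (hdn rs)" using yrs by (cases rs) auto
    have "rowpair r' (hdn rs')"
      using ins_pair[OF r(3) r(2) tabl_hdn_sorted[OF r(4)] xr c] yh IH y_def r'_def by simp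
    then have t: "tabl P'" using PP IH r fr r'_def by simp
    have dr: "distinct r" using r(2) strict_sorted_iff by blast
    have sr': "set r' = insert x (set r - {y})"
      using set_update_distinct[OF dr c] r'_def y_def by simp
    have "set (concat P') = insert x (set (concat (r # rs)))"
      using PP IH sr' yr by auto
    moreover have "map length P' = map length (add_at (r # rs) i x)"
      using PP IH r'_def map_length_add_at[of rs i0 y x] by simp
    moreover have "del_from P' i = (r # rs, x)" using PP IH fr by simp
    ultimately show ?thesis using PP IH t ri' by simp
  qed
qed



definition dstep :: "nat list \<Rightarrow> nat list \<Rightarrow> nat \<Rightarrow> bool" where
  "dstep s s0 y \<longleftrightarrow> (s \<noteq> [] \<and> s0 = butlast s \<and> y = last s) \<or>
     (\<exists>e y'. e < length s \<and> y = s ! e \<and> s0 = s[e := y'] \<and> y < y')"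

definition rm_at :: "tableau \<Rightarrow> nat \<Rightarrow> tableau" where
  "rm_at Q i = (if length (Q ! i) \<le> 1 then take i Q else Q[i := butlast (Q ! i)])"

lemma rm_at_Cons_Suc[simp]: "rm_at (r # rs) (Suc i) = r # rm_at rs i"
  by (simp add: rm_at_def)

lemma rm_at_Cons_0[simp]: "rm_at (r # rs) 0 = (if length r \<le> 1 then [] else butlast r # rs)"
  by (simp add: rm_at_def)

lemma del_pair:
  assumes rp: "rowpair r s" and sr: "sorted_wrt (<) r" and ss: "sorted_wrt (<) s"
    and yr: "y \<notin> set r" and ds: "dstep s s0 y"
  shows "1 \<le> cnt r y" "rowpair (r[cnt r y - 1 := y]) s0"
    "dstep r (r[cnt r y - 1 := y]) (r ! (cnt r y - 1))"
    "sorted_wrt (<) (r[cnt r y - 1 := y])"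
    "row_ins (r[cnt r y - 1 := y]) (r ! (cnt r y - 1)) = (r, Some y)"
proof -
  have rp1: "length s \<le> length r" and rp2: "\<And>j. j < length s \<Longrightarrow> r ! j < s ! j"
    using rp by (auto simp: rowpair_def)
  obtain e where e: "e < length s" "y = s ! e"
    and cases: "(s0 = butlast s \<and> e = length s - 1) \<or> (\<exists>y'. s0 = s[e := y'] \<and> y < y')"
    using ds unfolding dstep_def by (metis diff_less last_conv_nth length_greater_0_conv zero_less_one)
  define c where "c = cnt r y"
  have ec: "e < c"
  proof (rule ccontr)
    assume "\<not> e < c"
    then have "y \<le> r ! e" using cnt_ge[OF sr, of y e] c_def e(1) rp1 by simp
    moreover have "r ! e < y" using rp2 e by simp
    ultimately show False by simp
  qed
  then show c1: "1 \<le> cnt r y" using c_def by simp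
  define c' where "c' = c - 1"
  have cc: "c = Suc c'" using ec c'_def by simp
  have cl: "c' < length r" using cnt_le[of r y] c_def cc by simp
  have ec': "e \<le> c'" using ec cc by simp
  define z where "z = r ! c'"
  have zy: "z < y" using cnt_lt[OF sr, of c' y] c_def cc z_def by simp
  have lo: "\<forall>j<c'. r ! j < y" using cnt_lt[OF sr, of _ y] c_def cc by simp
  have lo': "\<forall>j<c'. r ! j < z" using sr cl z_def by (simp add: sorted_wrt_iff_nth_less)
  have hi: "\<forall>j. c' < j \<and> j < length r \<longrightarrow> y < r ! j"
  proof (intro allI impI)
    fix j assume j: "c' < j \<and> j < length r"
    then have "y \<le> r ! j" using cnt_ge[OF sr, of y j] c_def cc by simp
    moreover have "r ! j \<noteq> y" using yr j by (metis nth_mem)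
    ultimately show "y < r ! j" by simp
  qed
  have sr0: "sorted_wrt (<) (r[c' := y])" using sorted_upd[OF sr cl lo hi] .
  then show "sorted_wrt (<) (r[cnt r y - 1 := y])" using c_def c'_def by simp
  have "rowpair (r[c' := y]) s0"
  proof -
    from cases show ?thesis
    proof
      assume a: "s0 = butlast s \<and> e = length s - 1"
      show ?thesis unfolding rowpair_def
      proof (intro conjI allI impI)
        show "length s0 \<le> length (r[c' := y])" using a rp1 by simp
        fix j assume "j < length s0"
        then have j: "j < length s - 1" using a by simp
        then have "j \<noteq> c'" using a ec' by simp
        then show "r[c' := y] ! j < s0 ! j" using a j rp2 by (simp add: nth_butlast)
      qed
    next
      assume "\<exists>y'. s0 = s[e := y'] \<and> y < y'"
      then obtain y' where a: "s0 = s[e := y']" "y < y'" by blast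
      show ?thesis unfolding rowpair_def
      proof (intro conjI allI impI)
        show "length s0 \<le> length (r[c' := y])" using a rp1 by simp
        fix j assume j0: "j < length s0"
        then have j: "j < length s" using a by simp
        show "r[c' := y] ! j < s0 ! j"
        proof (cases "j = e")
          case True
          show ?thesis
          proof (cases "e = c'")
            case True then show ?thesis using \<open>j = e\<close> a cl e by simp
          next
            case False
            then have "e < c'" using ec' by simp
            then have "r ! e < y" using lo by simp
            then show ?thesis using \<open>j = e\<close> False a e by simp
          qed
        next
          case False
          show ?thesis
          proof (cases "j = c'")
            case True
            then have "e < j" using ec' False by simp
            then have "s ! e < s ! j" using ss j by (simp add: sorted_wrt_iff_nth_less)
            then show ?thesis using True False a e cl j by simp
          next
            case False
            then show ?thesis using \<open>j \<noteq> e\<close> a rp2 j by simp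
          qed
        qed
      qed
    qed
  qed
  then show "rowpair (r[cnt r y - 1 := y]) s0" using c_def c'_def by simp
  show "dstep r (r[cnt r y - 1 := y]) (r ! (cnt r y - 1))"
    unfolding dstep_def using cl zy z_def c_def c'_def by blast
  have dr: "distinct r" using sr strict_sorted_iff by blast
  have zn: "z \<notin> set (r[c' := y])"
    using set_update_distinct[OF dr cl] zy z_def by auto
  have "cnt (r[c' := y]) z = c'"
  proof (rule cnt_unique[OF sr0])
    show "c' \<le> length (r[c' := y])" using cl by simp
    show "\<forall>j<c'. r[c' := y] ! j < z" using lo' by simp
    show "\<forall>j. c' \<le> j \<and> j < length (r[c' := y]) \<longrightarrow> z \<le> r[c' := y] ! j"
    proof (intro allI impI)
      fix j assume j: "c' \<le> j \<and> j < length (r[c' := y])"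
      show "z \<le> r[c' := y] ! j"
      proof (cases "j = c'")
        case True then show ?thesis using zy cl by simp
      next
        case False
        then have "c' < j" using j by simp
        then have "y < r ! j" using hi j by simp
        then show ?thesis using False zy by simp
      qed
    qed
  qed
  then have "row_ins (r[c' := y]) z = (r, Some y)"
    using row_ins_char[OF sr0 zn] cl z_def by simp
  then show "row_ins (r[cnt r y - 1 := y]) (r ! (cnt r y - 1)) = (r, Some y)"
    using c_def c'_def z_def by simp
qed

lemma tabl_Cons_hd: "tabl rs \<Longrightarrow> hdn rs = [] \<Longrightarrow> rs = []"
  by (cases rs) auto

lemma del_props:
  "tabl P' \<Longrightarrow> distinct (concat P') \<Longrightarrow> corner P' i \<Longrightarrow> del_from P' i = (P, x) \<Longrightarrow>
   tabl P \<and> distinct (concat P) \<and> set (concat P') = insert x (set (concat P)) \<and>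
   x \<notin> set (concat P) \<and> ins P x = (P', i) \<and> map length P = map length (rm_at P' i) \<and>
   dstep (hdn P') (hdn P) x"
proof (induction P' arbitrary: i P x)
  case Nil then show ?case by simp
next
  case (Cons s rest)
  have s: "s \<noteq> []" "sorted_wrt (<) s" "rowpair s (hdn rest)" "tabl rest" using Cons.prems(1) by auto
  show ?case
  proof (cases i)
    case 0
    then have cor: "length (hdn rest) < length s" using Cons.prems(3) by simp
    show ?thesis
    proof (cases "length s \<le> 1")
      case True
      then obtain a where sa: "s = [a]" using s(1) by (cases s) auto
      then have "hdn rest = []" using cor by simp
      then have "rest = []" using tabl_Cons_hd s(4) by simp
      then show ?thesis using Cons.prems(4) 0 sa by (auto simp: dstep_def)
    next
      case False
      then have PP0: "P = butlast s # rest" "x = last s" using Cons.prems(4) 0 by auto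
      define b where "b = butlast s"
      have PP: "P = b # rest" using PP0 b_def by simp
      have sd: "s = b @ [x]" using PP0 s(1) b_def by simp
      have sb: "sorted_wrt (<) b" "\<forall>z\<in>set b. z < x"
        using s(2) unfolding sd by (simp_all add: sorted_wrt_append)
      have "rowpair b (hdn rest)" using s(3) cor unfolding b_def
        by (auto simp: rowpair_def nth_butlast)
      moreover have "b \<noteq> []" using False b_def by (cases s) auto
      ultimately have t: "tabl P" using PP sb s(4) by simp
      have d: "distinct (b @ x # concat rest)" using Cons.prems(2) unfolding sd by simp
      then have "distinct (concat P)" "x \<notin> set (concat P)" using PP by auto
      moreover have "set (concat (s # rest)) = insert x (set (concat P))" using PP unfolding sd by auto
      moreover have "ins P x = (s # rest, i)" using PP 0 row_ins_all_less[OF sb(2)] unfolding sd by simp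
      moreover have "dstep (hdn (s # rest)) (hdn P) x" using PP0 s(1) by (simp add: dstep_def)
      moreover have "map length P = map length (rm_at (s # rest) i)" using PP0 0 False by simp
      ultimately show ?thesis using t by simp
    qed
  next
    case (Suc i0)
    then have cor: "corner rest i0" using Cons.prems(3) by simp
    obtain rs0 y where drest: "del_from rest i0 = (rs0, y)" by fastforce
    define c where "c = cnt s y"
    define s0 where "s0 = s[c - 1 := y]"
    define z where "z = s ! (c - 1)"
    have PP: "P = s0 # rs0" "x = z" using Cons.prems(4) Suc drest
      by (simp_all add: row_del_def c_def s0_def z_def Let_def)
    have drs: "distinct (concat rest)" using Cons.prems(2) by simp
    note IH = Cons.IH[OF s(4) drs cor drest]
    have ys: "y \<notin> set s" using IH Cons.prems(2) by auto
    note dp = del_pair[OF s(3) s(2) tabl_hdn_sorted[OF s(4)] ys, of "hdn rs0"]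
    have dp1: "1 \<le> c" "rowpair s0 (hdn rs0)" "dstep s s0 z" "sorted_wrt (<) s0" "row_ins s0 z = (s, Some y)"
      using dp IH c_def s0_def z_def by auto
    have cl: "c - 1 < length s" using dp1(1) cnt_le[of s y] c_def by simp
    have ds: "distinct s" using s(2) strict_sorted_iff by blast
    have ss0: "set s0 = insert y (set s - {z})" using set_update_distinct[OF ds cl] s0_def z_def by simp
    have zs: "z \<in> set s" using cl z_def by simp
    have zy: "z \<noteq> y" using zs ys by auto
    have disj: "set s \<inter> set (concat rest) = {}" using Cons.prems(2) by simp
    have t: "tabl P" using PP dp1 IH s(1) s0_def by simp
    have d0: "distinct s0" using dp1(4) strict_sorted_iff by blast
    have "distinct (concat P)" using PP d0 IH ss0 disj by auto
    moreover have "set (concat (s # rest)) = insert x (set (concat P))" using PP IH ss0 zs zy by auto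
    moreover have "x \<notin> set (concat P)" using PP IH ss0 zs zy disj by auto
    moreover have "ins P x = (s # rest, i)" using PP dp1(5) IH Suc by simp
    moreover have "map length P = map length (rm_at (s # rest) i)" using PP IH Suc s0_def by simp
    moreover have "dstep (hdn (s # rest)) (hdn P) x" using PP dp1 by simp
    ultimately show ?thesis using t by simp
  qed
qed



lemma rowpair_butlast: "rowpair r s \<Longrightarrow> rowpair r (butlast s)"
  by (auto simp: rowpair_def nth_butlast)

lemma rowpair_snoc2: "rowpair q s \<Longrightarrow> length s < length q \<Longrightarrow> \<forall>z\<in>set q. z < k \<Longrightarrow> rowpair q (s @ [k])"
  by (auto simp: rowpair_def nth_append less_Suc_eq)

lemma hdn_add_at: "hdn (add_at qs i k) = hdn qs \<or> hdn (add_at qs i k) = hdn qs @ [k]"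
  by (cases qs; cases i) auto

lemma length_hdn: "map length A = map length B \<Longrightarrow> length (hdn A) = length (hdn B)"
  by (cases A; cases B) auto

lemma tabl_add_at:
  "tabl Q \<Longrightarrow> \<forall>z\<in>set (concat Q). z < k \<Longrightarrow> tabl P' \<Longrightarrow> map length P' = map length (add_at Q i k) \<Longrightarrow>
   tabl (add_at Q i k)"
proof (induction Q arbitrary: i P')
  case Nil then show ?case by simp
next
  case (Cons q qs)
  have q: "q \<noteq> []" "sorted_wrt (<) q" "rowpair q (hdn qs)" "tabl qs" using Cons.prems(1) by auto
  have qk: "\<forall>z\<in>set q. z < k" "\<forall>z\<in>set (concat qs). z < k" using Cons.prems(2) by auto
  show ?case
  proof (cases i)
    case 0 then show ?thesis using q qk by (simp add: sorted_snoc_less rowpair_snoc)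
  next
    case (Suc i0)
    obtain p ps where P': "P' = p # ps" using Cons.prems(4) Suc by (cases P') auto
    have lp: "length p = length q" "map length ps = map length (add_at qs i0 k)"
      using Cons.prems(4) Suc P' by auto
    have tp: "tabl ps" "rowpair p (hdn ps)" using Cons.prems(3) P' by auto
    have IH: "tabl (add_at qs i0 k)" using Cons.IH[OF q(4) qk(2) tp(1) lp(2)] .
    have len: "length (hdn (add_at qs i0 k)) \<le> length q"
      using length_hdn[OF lp(2)] tp(2) lp(1) by (simp add: rowpair_def)
    have "rowpair q (hdn (add_at qs i0 k))"
    proof (cases "hdn (add_at qs i0 k) = hdn qs")
      case True then show ?thesis using q(3) by simp
    next
      case False
      then have e: "hdn (add_at qs i0 k) = hdn qs @ [k]" using hdn_add_at by metis
      then show ?thesis using rowpair_snoc2[OF q(3) _ qk(1)] len by simp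
    qed
    then show ?thesis using Suc q IH by simp
  qed
qed

lemma sorted_last_max: "sorted_wrt (<) (r::nat list) \<Longrightarrow> a \<in> set r \<Longrightarrow> a \<le> last r"
proof -
  assume s: "sorted_wrt (<) r" and a: "a \<in> set r"
  then obtain j where j: "j < length r" "a = r ! j" by (metis in_set_conv_nth)
  have "r \<noteq> []" using j by auto
  then have l: "last r = r ! (length r - 1)" by (simp add: last_conv_nth)
  show ?thesis
  proof (cases "j = length r - 1")
    case True then show ?thesis using j l by simp
  next
    case False then have "j < length r - 1" using j by simp
    then show ?thesis using s j l by (simp add: sorted_wrt_iff_nth_less less_imp_le)
  qed
qed

lemma rm_props:
  "tabl Q \<Longrightarrow> distinct (concat Q) \<Longrightarrow> \<forall>z\<in>set (concat Q). z \<le> M \<Longrightarrow> i < length Q \<Longrightarrow> M \<in> set (Q ! i) \<Longrightarrow>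
   corner Q i \<and> tabl (rm_at Q i) \<and> distinct (concat (rm_at Q i)) \<and>
   set (concat Q) = insert M (set (concat (rm_at Q i))) \<and> M \<notin> set (concat (rm_at Q i)) \<and>
   add_at (rm_at Q i) i M = Q"
proof (induction Q arbitrary: i)
  case Nil then show ?case by simp
next
  case (Cons r rs)
  have r: "r \<noteq> []" "sorted_wrt (<) r" "rowpair r (hdn rs)" "tabl rs" using Cons.prems(1) by auto
  show ?case
  proof (cases i)
    case 0
    then have Mr: "M \<in> set r" using Cons.prems(5) by simp
    have "M \<le> last r" using sorted_last_max[OF r(2) Mr] .
    moreover have "last r \<le> M" using Cons.prems(3) r(1) by simp
    ultimately have lM: "last r = M" by simp
    define b where "b = butlast r"
    have rb: "r = b @ [M]" using lM r(1) b_def by (metis append_butlast_last_id)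
    have hM: "\<forall>z\<in>set (hdn rs). z \<le> M" using Cons.prems(3) by (cases rs) auto
    have cor: "length (hdn rs) < length r"
    proof (rule ccontr)
      assume "\<not> length (hdn rs) < length r"
      then have eq: "length (hdn rs) = length r" using r(3) by (simp add: rowpair_def)
      let ?j = "length r - 1"
      have "r ! ?j < hdn rs ! ?j" using r(3) eq r(1) by (simp add: rowpair_def)
      moreover have "r ! ?j = M" using lM r(1) by (simp add: last_conv_nth)
      moreover have "hdn rs ! ?j \<le> M" using hM eq r(1)
        by (metis diff_less length_greater_0_conv nth_mem zero_less_one)
      ultimately show False by simp
    qed
    have d: "distinct (b @ M # concat rs)" using Cons.prems(2) unfolding rb by simp
    show ?thesis
    proof (cases "length r \<le> 1")
      case True
      then have rM: "r = [M]" using rb by (cases b) auto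
      have "length (hdn rs) = 0" using cor True by linarith
      then have "rs = []" using tabl_Cons_hd[OF r(4)] by simp
      then show ?thesis using 0 rM by simp
    next
      case False
      then have bn: "b \<noteq> []" using rb by auto
      have sb: "sorted_wrt (<) b" using r(2) unfolding rb by (simp add: sorted_wrt_append)
      have "rowpair b (hdn rs)" using r(3) cor unfolding b_def
        by (auto simp: rowpair_def nth_butlast)
      then have "tabl (b # rs)" using bn sb r(4) by simp
      moreover have "rm_at (r # rs) i = b # rs" using 0 False b_def by simp
      ultimately show ?thesis using 0 d cor rb by auto
    qed
  next
    case (Suc i0)
    have Mrs: "M \<in> set (rs ! i0)" "i0 < length rs" using Cons.prems(4,5) Suc by auto
    then have Mc: "M \<in> set (concat rs)" by auto
    have IH: "corner rs i0 \<and> tabl (rm_at rs i0) \<and> distinct (concat (rm_at rs i0)) \<and>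
      set (concat rs) = insert M (set (concat (rm_at rs i0))) \<and> M \<notin> set (concat (rm_at rs i0)) \<and>
      add_at (rm_at rs i0) i0 M = rs"
      using Cons.IH[OF r(4) _ _ Mrs(2) Mrs(1)] Cons.prems(2,3) by simp
    have hr: "hdn (rm_at rs i0) = hdn rs \<or> hdn (rm_at rs i0) = butlast (hdn rs) \<or> hdn (rm_at rs i0) = []"
      by (cases rs; cases i0) (auto simp: rm_at_def)
    have "rowpair r (hdn (rm_at rs i0))" using hr r(3) rowpair_butlast by auto
    then have t: "tabl (r # rm_at rs i0)" using r IH by simp
    have disj: "set r \<inter> set (concat rs) = {}" "distinct r" using Cons.prems(2) by auto
    have "M \<notin> set r" using disj Mc by auto
    then show ?thesis using Suc t IH disj by auto
  qed
qed

lemma map_length_rm_at: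
  "map length A = map length B \<Longrightarrow> map length (rm_at A i) = map length (rm_at B i)"
proof (induction A arbitrary: B i)
  case Nil then show ?case by (simp add: rm_at_def)
next
  case (Cons a as)
  then obtain b bs where B: "B = b # bs" "length a = length b" "map length as = map length bs" by (cases B) auto
  then show ?case using Cons.IH by (cases i) auto
qed

lemma corner_shape: "map length A = map length B \<Longrightarrow> corner A i = corner B i"
proof (induction A arbitrary: B i)
  case Nil then show ?case by simp
next
  case (Cons a as)
  then obtain b bs where B: "B = b # bs" "length a = length b" "map length as = map length bs" by (cases B) auto
  then show ?case using Cons.IH length_hdn[OF B(3)] by (cases i) auto
qed

lemma rs_go_snoc:
  "rs_go (xs @ [x]) PQ k = (let (P, Q) = rs_go xs PQ k; (P', i) = ins P x in (P', add_at Q i (k + length xs)))"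
proof (induction xs arbitrary: PQ k)
  case Nil then show ?case by (cases PQ) (simp split: prod.splits)
next
  case (Cons y ys)
  obtain P Q where PQ: "PQ = (P, Q)" by fastforce
  obtain P1 i1 where ip: "ins P y = (P1, i1)" by fastforce
  show ?case using Cons.IH[of "(P1, add_at Q i1 k)" "Suc k"] PQ ip by simp
qed

definition rowof :: "tableau \<Rightarrow> nat \<Rightarrow> nat" where
  "rowof Q a = (LEAST i. i < length Q \<and> a \<in> set (Q ! i))"

lemma rows_unique:
  "distinct (concat Q) \<Longrightarrow> i < length Q \<Longrightarrow> j < length Q \<Longrightarrow> a \<in> set (Q ! i) \<Longrightarrow> a \<in> set (Q ! j) \<Longrightarrow> i = j"
proof (induction Q arbitrary: i j)
  case Nil then show ?case by simp
next
  case (Cons r rs)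
  show ?case
  proof (cases i; cases j)
    fix i' j' assume "i = Suc i'" "j = Suc j'" then show ?thesis using Cons by auto
  next
    fix j' assume "i = 0" "j = Suc j'"
    then show ?thesis using Cons.prems by (auto simp: set_concat dest!: nth_mem)
  next
    fix i' assume "i = Suc i'" "j = 0"
    then show ?thesis using Cons.prems by (auto simp: set_concat dest!: nth_mem)
  qed simp
qed

lemma rowof_eq: "distinct (concat Q) \<Longrightarrow> i < length Q \<Longrightarrow> a \<in> set (Q ! i) \<Longrightarrow> rowof Q a = i"
  unfolding rowof_def by (rule Least_equality) (auto dest: rows_unique)

lemma rowof_ex: "a \<in> set (concat Q) \<Longrightarrow> rowof Q a < length Q \<and> a \<in> set (Q ! rowof Q a)"
proof -
  assume "a \<in> set (concat Q)"
  then obtain r where r: "r \<in> set Q" "a \<in> set r" by auto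
  then obtain i where "i < length Q" "Q ! i = r" by (metis in_set_conv_nth)
  then have "\<exists>i. i < length Q \<and> a \<in> set (Q ! i)" using r by blast
  then show ?thesis unfolding rowof_def by (rule LeastI_ex)
qed

fun unRS :: "nat \<Rightarrow> tableau \<Rightarrow> tableau \<Rightarrow> nat list" where
  "unRS 0 P Q = []"
| "unRS (Suc m) P Q = (let i = rowof Q (Suc m); (P0, x) = del_from P i in unRS m P0 (rm_at Q i) @ [x])"

lemma length_unRS: "length (unRS m P Q) = m"
  by (induction m arbitrary: P Q) (auto simp: Let_def split: prod.splits)

lemma length_concat_add_at: "length (concat (add_at T i a)) = Suc (length (concat T))"
proof (induction T arbitrary: i)
  case (Cons r rs) then show ?case by (cases i) auto
qed simp

lemma add_at_nth: "i \<le> length T \<Longrightarrow> i < length (add_at T i a) \<and> a \<in> set (add_at T i a ! i)"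
  by (auto simp: add_at_def nth_append)

lemma rm_add_at: "tabl Q \<Longrightarrow> i \<le> length Q \<Longrightarrow> rm_at (add_at Q i a) i = Q"
proof (induction Q arbitrary: i)
  case Nil then show ?case by (simp add: rm_at_def)
next
  case (Cons q qs) then show ?case by (cases i) auto
qed



lemma map_length_add_at2:
  "map length A = map length B \<Longrightarrow> map length (add_at A i a) = map length (add_at B i b)"
proof (induction A arbitrary: B i)
  case Nil then show ?case by auto
next
  case (Cons r rs)
  then obtain q qs where B: "B = q # qs" "length r = length q" "map length rs = map length qs" by (cases B) auto
  then show ?case using Cons.IH by (cases i) auto
qed

lemma set_concat_add_at: "set (concat (add_at T i a)) = insert a (set (concat T))"
proof (induction T arbitrary: i)
  case (Cons r rs) then show ?case by (cases i) auto
qed simp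

lemma distinct_add_at: "distinct (concat T) \<Longrightarrow> a \<notin> set (concat T) \<Longrightarrow> distinct (concat (add_at T i a))"
proof (induction T arbitrary: i)
  case (Cons r rs)
  show ?case
  proof (cases i)
    case 0 then show ?thesis using Cons.prems by auto
  next
    case (Suc i0)
    have "set (concat (add_at rs i0 a)) = insert a (set (concat rs))" by (rule set_concat_add_at)
    moreover have "distinct (concat (add_at rs i0 a))" using Cons by simp
    ultimately show ?thesis using Suc Cons.prems by (auto simp del: set_concat)
  qed
qed simp

lemma RS_Nil: "RS [] = ([], [])" by (simp add: RS_def)

lemma RS_snoc: "RS (xs @ [x]) = (let (P, Q) = RS xs; (P', i) = ins P x in (P', add_at Q i (Suc (length xs))))"
  unfolding RS_def rs_go_snoc by simp

lemma RS_props: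
  "distinct w \<Longrightarrow> RS w = (P, Q) \<Longrightarrow>
   tabl P \<and> distinct (concat P) \<and> set (concat P) = set w \<and> tabl Q \<and> distinct (concat Q) \<and>
   set (concat Q) = {1..length w} \<and> map length P = map length Q \<and> unRS (length w) P Q = w"
proof (induction w arbitrary: P Q rule: rev_induct)
  case Nil then show ?case by (simp add: RS_Nil)
next
  case (snoc x xs)
  have dxs: "distinct xs" "x \<notin> set xs" using snoc.prems(1) by auto
  obtain P0 Q0 where R0: "RS xs = (P0, Q0)" by fastforce
  obtain P1 i where I: "ins P0 x = (P1, i)" by fastforce
  have PQ: "P = P1" "Q = add_at Q0 i (Suc (length xs))"
    using snoc.prems(2) R0 I by (simp_all add: RS_snoc)
  note IH = snoc.IH[OF dxs(1) R0]
  have xP0: "x \<notin> set (concat P0)" using IH dxs by simp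
  note IP = ins_props[OF _ _ xP0 I] 
  have ip: "tabl P1" "set (concat P1) = insert x (set (concat P0))" "corner P1 i" "i \<le> length P0"
    "map length P1 = map length (add_at P0 i x)" "del_from P1 i = (P0, x)"
    using IP IH by auto
  have "length (concat P1) = Suc (length (concat P0))"
    using ip(5) length_concat_add_at[of P0 i x] by (simp add: length_concat)
  moreover have "card (set (concat P1)) = Suc (card (set (concat P0)))"
    using ip(2) xP0 by simp
  moreover have "card (set (concat P0)) = length (concat P0)" using IH distinct_card by blast
  ultimately have dP: "distinct (concat P1)" by (metis card_distinct)
  have lt: "\<forall>z\<in>set (concat Q0). z < Suc (length xs)" using IH by auto
  have ml: "map length P1 = map length (add_at Q0 i (Suc (length xs)))"
    using ip(5) map_length_add_at2[of P0 Q0 i x "Suc (length xs)"] IH by simp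
  have tQ: "tabl Q" using tabl_add_at[OF _ lt ip(1) ml] IH PQ by simp
  have sQ: "set (concat Q) = {1..length (xs @ [x])}" using PQ IH set_concat_add_at by auto
  have nQ: "Suc (length xs) \<notin> set (concat Q0)" using IH by simp
  have dQ: "distinct (concat Q)" using PQ distinct_add_at[OF _ nQ] IH by simp
  have lQ: "length Q0 = length P0" using IH by (metis length_map)
  have an: "i < length Q \<and> Suc (length xs) \<in> set (Q ! i)" using add_at_nth[of i Q0] ip(4) lQ PQ by simp
  have ro: "rowof Q (Suc (length xs)) = i" using rowof_eq[OF dQ] an by simp
  have rm: "rm_at Q i = Q0" using PQ rm_add_at[of Q0 i] IH ip(4) lQ by simp
  have "unRS (length (xs @ [x])) P Q = xs @ [x]" using ro rm ip(6) PQ IH by simp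
  then show ?case using PQ ip dP tQ sQ dQ ml IH by simp
qed

lemma tabl_empty: "tabl Q \<Longrightarrow> set (concat Q) = {} \<Longrightarrow> Q = []"
  by (cases Q) auto

lemma unRS_props:
  "tabl P \<Longrightarrow> distinct (concat P) \<Longrightarrow> tabl Q \<Longrightarrow> distinct (concat Q) \<Longrightarrow> set (concat Q) = {1..m} \<Longrightarrow>
   map length P = map length Q \<Longrightarrow>
   distinct (unRS m P Q) \<and> set (unRS m P Q) = set (concat P) \<and> RS (unRS m P Q) = (P, Q)"
proof (induction m arbitrary: P Q)
  case 0
  then have "Q = []" using tabl_empty by simp
  then have "P = []" using 0 by simp
  then show ?case using \<open>Q = []\<close> by (simp add: RS_Nil)
next
  case (Suc m)
  define M where "M = Suc m"
  define i where "i = rowof Q M"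
  have MQ: "M \<in> set (concat Q)" using Suc.prems(5) M_def by simp
  have ri: "i < length Q" "M \<in> set (Q ! i)" using rowof_ex[OF MQ] i_def by auto
  have le: "\<forall>z\<in>set (concat Q). z \<le> M" using Suc.prems(5) M_def by simp
  note RP = rm_props[OF Suc.prems(3,4) le ri]
  define Q0 where "Q0 = rm_at Q i"
  have "set (concat Q0) = set (concat Q) - {M}" using RP unfolding Q0_def by blast
  then have "set (concat Q0) = {1..m}" using Suc.prems(5) M_def by auto
  then have q0: "corner Q i" "tabl Q0" "distinct (concat Q0)" "set (concat Q0) = {1..m}" "add_at Q0 i M = Q"
    using RP unfolding Q0_def by auto
  have cP: "corner P i" using corner_shape[OF Suc.prems(6)] q0(1) by simp
  obtain P0 x where dl: "del_from P i = (P0, x)" by fastforce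
  note DP = del_props[OF Suc.prems(1,2) cP dl]
  have ml0: "map length P0 = map length Q0"
    using DP map_length_rm_at[OF Suc.prems(6)] Q0_def by simp
  note IH = Suc.IH[of P0 Q0] DP q0 ml0
  have IH': "distinct (unRS m P0 Q0) \<and> set (unRS m P0 Q0) = set (concat P0) \<and> RS (unRS m P0 Q0) = (P0, Q0)"
    using Suc.IH[of P0 Q0] DP q0 ml0 by simp
  have u: "unRS (Suc m) P Q = unRS m P0 Q0 @ [x]"
    using dl i_def M_def Q0_def by (simp add: Let_def)
  have "RS (unRS m P0 Q0 @ [x]) = (P, Q)"
    using IH' DP q0 length_unRS[of m P0 Q0] M_def by (simp add: RS_snoc)
  then show ?case using u IH' DP by simp
qed



lemma tabl_iff:
  "tabl T \<longleftrightarrow> (\<forall>i<length T. T ! i \<noteq> [] \<and> sorted_wrt (<) (T ! i)) \<and>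
              (\<forall>i. Suc i < length T \<longrightarrow> rowpair (T ! i) (T ! Suc i))"
proof (induction T)
  case Nil then show ?case by simp
next
  case (Cons r rs)
  show ?case
  proof
    assume t: "tabl (r # rs)"
    then have IH: "(\<forall>i<length rs. rs ! i \<noteq> [] \<and> sorted_wrt (<) (rs ! i)) \<and>
              (\<forall>i. Suc i < length rs \<longrightarrow> rowpair (rs ! i) (rs ! Suc i))" using Cons.IH by simp
    have r: "r \<noteq> []" "sorted_wrt (<) r" "rowpair r (hdn rs)" using t by auto
    show "(\<forall>i<length (r # rs). (r # rs) ! i \<noteq> [] \<and> sorted_wrt (<) ((r # rs) ! i)) \<and>
          (\<forall>i. Suc i < length (r # rs) \<longrightarrow> rowpair ((r # rs) ! i) ((r # rs) ! Suc i))"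
    proof (intro conjI allI impI)
      fix i assume "i < length (r # rs)"
      then show "(r # rs) ! i \<noteq> []" "sorted_wrt (<) ((r # rs) ! i)" using r IH by (cases i; simp)+
    next
      fix i assume i: "Suc i < length (r # rs)"
      show "rowpair ((r # rs) ! i) ((r # rs) ! Suc i)"
      proof (cases i)
        case 0 then show ?thesis using r(3) i by (cases rs) auto
      next
        case (Suc i') then show ?thesis using IH i by simp
      qed
    qed
  next
    assume a: "(\<forall>i<length (r # rs). (r # rs) ! i \<noteq> [] \<and> sorted_wrt (<) ((r # rs) ! i)) \<and>
          (\<forall>i. Suc i < length (r # rs) \<longrightarrow> rowpair ((r # rs) ! i) ((r # rs) ! Suc i))"
    have "(\<forall>i<length rs. rs ! i \<noteq> [] \<and> sorted_wrt (<) (rs ! i)) \<and>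
              (\<forall>i. Suc i < length rs \<longrightarrow> rowpair (rs ! i) (rs ! Suc i))"
    proof (intro conjI allI impI)
      fix i assume "i < length rs"
      then show "rs ! i \<noteq> []" "sorted_wrt (<) (rs ! i)" using a[THEN conjunct1, rule_format, of "Suc i"] by auto
    next
      fix i assume "Suc i < length rs"
      then show "rowpair (rs ! i) (rs ! Suc i)" using a[THEN conjunct2, rule_format, of "Suc i"] by auto
    qed
    then have "tabl rs" using Cons.IH by simp
    moreover have "r \<noteq> []" "sorted_wrt (<) r" using a[THEN conjunct1, rule_format, of 0] by auto
    moreover have "rowpair r (hdn rs)" using a[THEN conjunct2, rule_format, of 0] by (cases rs) auto
    ultimately show "tabl (r # rs)" by simp
  qed
qed

lemma is_SYT_iff: "is_SYT n T \<longleftrightarrow> tabl T \<and> distinct (concat T) \<and> set (concat T) = {1..n}"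
proof
  assume s: "is_SYT n T"
  then have p: "sorted_wrt (\<ge>) (map length T)" "0 \<notin> set (map length T)"
    and d: "distinct (concat T)" "set (concat T) = {1..n}"
    and rs: "\<forall>r\<in>set T. sorted_wrt (<) r"
    and col: "\<forall>i j. Suc i < length T \<and> j < length (T ! Suc i) \<longrightarrow> T ! i ! j < T ! Suc i ! j"
    unfolding is_SYT_def is_partition_def shape_def by auto
  have tr: "transp ((\<ge>) :: nat \<Rightarrow> nat \<Rightarrow> bool)" by (auto simp: transp_def)
  have "tabl T" unfolding tabl_iff
  proof (intro conjI allI impI)
    fix i assume i: "i < length T"
    show "T ! i \<noteq> []" using p(2) i by (metis length_0_conv length_map nth_map nth_mem)
    show "sorted_wrt (<) (T ! i)" using rs i by simp
  next
    fix i assume i: "Suc i < length T"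
    have "length (T ! Suc i) \<le> length (T ! i)"
      using p(1)[unfolded sorted_wrt_iff_nth_Suc_transp[OF tr]] i by simp
    then show "rowpair (T ! i) (T ! Suc i)" using col i by (simp add: rowpair_def)
  qed
  then show "tabl T \<and> distinct (concat T) \<and> set (concat T) = {1..n}" using d by simp
next
  assume a: "tabl T \<and> distinct (concat T) \<and> set (concat T) = {1..n}"
  then have t1: "\<forall>i<length T. T ! i \<noteq> [] \<and> sorted_wrt (<) (T ! i)"
    and t2: "\<forall>i. Suc i < length T \<longrightarrow> rowpair (T ! i) (T ! Suc i)" using tabl_iff by auto
  have tr: "transp ((\<ge>) :: nat \<Rightarrow> nat \<Rightarrow> bool)" by (auto simp: transp_def)
  have "sorted_wrt (\<ge>) (map length T)"
    unfolding sorted_wrt_iff_nth_Suc_transp[OF tr] using t2 by (simp add: rowpair_def)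
  moreover have "0 \<notin> set (map length T)" using t1 by (auto simp: in_set_conv_nth)
  moreover have "sum_list (map length T) = n"
  proof -
    have "sum_list (map length T) = length (concat T)" by (simp add: length_concat)
    also have "\<dots> = card (set (concat T))" using a distinct_card by metis
    finally show ?thesis using a by simp
  qed
  moreover have "\<forall>r\<in>set T. sorted_wrt (<) r" using t1 by (auto simp: in_set_conv_nth)
  moreover have "\<forall>i j. Suc i < length T \<and> j < length (T ! Suc i) \<longrightarrow> T ! i ! j < T ! Suc i ! j"
    using t2 by (simp add: rowpair_def)
  ultimately show "is_SYT n T" using a unfolding is_SYT_def is_partition_def shape_def by simp
qed

lemma perms_length: "w \<in> perms n \<Longrightarrow> length w = n"
  unfolding perms_def by (metis (mono_tags, lifting) card_atLeastAtMost diff_Suc_1 distinct_card mem_Collect_eq)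

lemma finite_perms: "finite (perms n)"
proof -
  have "perms n \<subseteq> {xs. set xs \<subseteq> {1..n} \<and> length xs \<le> n}" using perms_length unfolding perms_def by auto
  then show ?thesis using finite_lists_length_le[of "{1..n}" n] finite_subset by auto
qed

lemma SYT_sum: "is_SYT n P \<Longrightarrow> sum_list (shape P) = n"
  unfolding is_SYT_def is_partition_def by simp

lemma knuth_bij:
  assumes P: "is_SYT n P"
  shows "bij_betw (\<lambda>w. snd (RS w)) (knuth_class n P) {Q. is_SYT n Q \<and> shape Q = shape P}"
proof -
  have Pt: "tabl P" "distinct (concat P)" "set (concat P) = {1..n}" using P is_SYT_iff by auto
  have mem: "\<And>w. w \<in> knuth_class n P \<longleftrightarrow> w \<in> perms n \<and> fst (RS w) = P"
    unfolding knuth_class_def by (auto intro: prod.collapse[symmetric])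
  have props: "\<And>w. w \<in> knuth_class n P \<Longrightarrow> is_SYT n (snd (RS w)) \<and> shape (snd (RS w)) = shape P \<and>
       unRS n P (snd (RS w)) = w"
  proof -
    fix w assume "w \<in> knuth_class n P"
    then have w: "w \<in> perms n" "fst (RS w) = P" using mem by auto
    then have "RS w = (P, snd (RS w))" by (metis prod.collapse)
    moreover have "distinct w" "set w = {1..n}" "length w = n" using w(1) perms_length unfolding perms_def by auto
    ultimately show "is_SYT n (snd (RS w)) \<and> shape (snd (RS w)) = shape P \<and> unRS n P (snd (RS w)) = w"
      using RS_props[of w P "snd (RS w)"] is_SYT_iff shape_def by metis
  qed
  show ?thesis unfolding bij_betw_def
  proof (intro conjI)
    show "inj_on (\<lambda>w. snd (RS w)) (knuth_class n P)"
      by (rule inj_onI) (metis props)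
    show "(\<lambda>w. snd (RS w)) ` knuth_class n P = {Q. is_SYT n Q \<and> shape Q = shape P}"
    proof
      show "(\<lambda>w. snd (RS w)) ` knuth_class n P \<subseteq> {Q. is_SYT n Q \<and> shape Q = shape P}"
        using props by auto
      show "{Q. is_SYT n Q \<and> shape Q = shape P} \<subseteq> (\<lambda>w. snd (RS w)) ` knuth_class n P"
      proof
        fix Q assume "Q \<in> {Q. is_SYT n Q \<and> shape Q = shape P}"
        then have Q: "tabl Q" "distinct (concat Q)" "set (concat Q) = {1..n}" "map length P = map length Q"
          using is_SYT_iff shape_def by auto
        have u: "distinct (unRS n P Q) \<and> set (unRS n P Q) = set (concat P) \<and> RS (unRS n P Q) = (P, Q)"
          using unRS_props[OF Pt(1,2) Q] .
        then have "unRS n P Q \<in> knuth_class n P" using Pt(3) unfolding knuth_class_def perms_def by auto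
        then show "Q \<in> (\<lambda>w. snd (RS w)) ` knuth_class n P" using u by force
      qed
    qed
  qed
qed

lemma knuth_finite: "finite (knuth_class n P)"
  using finite_perms finite_subset unfolding knuth_class_def by fastforce

lemma card_knuth: "is_SYT n P \<Longrightarrow> card (knuth_class n P) = flam (shape P)"
  using bij_betw_same_card[OF knuth_bij] SYT_sum unfolding flam_def by metis

lemma SYT_finite: "finite {P. is_SYT n P}"
proof -
  have "{P. is_SYT n P} \<subseteq> (\<lambda>w. fst (RS w)) ` perms n"
  proof
    fix P assume "P \<in> {P. is_SYT n P}"
    then have P: "tabl P" "distinct (concat P)" "set (concat P) = {1..n}" using is_SYT_iff by auto
    have u: "distinct (unRS n P P) \<and> set (unRS n P P) = set (concat P) \<and> RS (unRS n P P) = (P, P)"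
      using unRS_props[OF P(1,2) P] by simp
    then have "unRS n P P \<in> perms n" using P(3) unfolding perms_def by auto
    then show "P \<in> (\<lambda>w. fst (RS w)) ` perms n" using u by force
  qed
  then show ?thesis using finite_perms finite_subset by blast
qed



lemma rs_go_row: "sorted_wrt (<) (r @ xs) \<Longrightarrow> fst (rs_go xs ([r], [q]) k) = [r @ xs]"
proof (induction xs arbitrary: r q k)
  case Nil then show ?case by simp
next
  case (Cons y ys)
  have "\<forall>z\<in>set r. z < y" using Cons.prems by (simp add: sorted_wrt_append)
  then have "ins [r] y = ([r @ [y]], 0)" using row_ins_all_less by simp
  then have "rs_go (y # ys) ([r], [q]) k = rs_go ys ([r @ [y]], [q @ [k]]) (Suc k)" by simp
  moreover have "sorted_wrt (<) ((r @ [y]) @ ys)" using Cons.prems by simp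
  ultimately show ?case using Cons.IH by simp
qed

lemma RS_iota: "1 \<le> n \<Longrightarrow> fst (RS (iota n)) = [[1..<Suc n]]"
proof -
  assume n: "1 \<le> n"
  have e: "[1..<Suc n] = 1 # [2..<Suc n]" using n upt_conv_Cons[of 1 "Suc n"] by (simp del: upt_Suc add: numeral_2_eq_2)
  have "RS (iota n) = rs_go [2..<Suc n] ([[1]], [[1]]) 2"
    unfolding RS_def iota_def e by (simp del: upt_Suc add: numeral_2_eq_2)
  moreover have "fst (rs_go [2..<Suc n] ([[1]], [[1]]) 2) = [[1] @ [2..<Suc n]]"
    by (rule rs_go_row) (simp del: upt_Suc)
  ultimately show ?thesis using e by simp
qed

lemma ins_col: "sorted_wrt (<) (x # as) \<Longrightarrow> fst (ins (map (\<lambda>a. [a]) as) x) = map (\<lambda>a. [a]) (x # as)"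
proof (induction as arbitrary: x)
  case Nil then show ?case by simp
next
  case (Cons a as)
  have "x < a" using Cons.prems by simp
  moreover have "sorted_wrt (<) (a # as)" using Cons.prems by simp
  ultimately show ?case using Cons.IH[of a] by (auto split: prod.splits)
qed

lemma rs_go_col: "sorted_wrt (<) (rev xs @ as) \<Longrightarrow> fst (rs_go xs (map (\<lambda>a. [a]) as, Q) k) = map (\<lambda>a. [a]) (rev xs @ as)"
proof (induction xs arbitrary: as Q k)
  case Nil then show ?case by simp
next
  case (Cons y ys)
  obtain P' i where I: "ins (map (\<lambda>a. [a]) as) y = (P', i)" by fastforce
  have s: "sorted_wrt (<) (y # as)" using Cons.prems by (simp add: sorted_wrt_append)
  have P': "P' = map (\<lambda>a. [a]) (y # as)" using ins_col[OF s] I by simp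
  have e1: "rs_go (y # ys) (map (\<lambda>a. [a]) as, Q) k = rs_go ys (P', add_at Q i k) (Suc k)"
    using I by simp
  have s2: "sorted_wrt (<) (rev ys @ (y # as))" using Cons.prems by simp
  have e2: "fst (rs_go ys (P', add_at Q i k) (Suc k)) = map (\<lambda>a. [a]) (rev ys @ (y # as))"
    unfolding P' by (rule Cons.IH[OF s2])
  show ?case using e1 e2 by simp
qed

lemma RS_delta: "fst (RS (delta n)) = map (\<lambda>a. [a]) [1..<Suc n]"
  using rs_go_col[of "rev [1..<Suc n]" "[]" "[]" 1] unfolding RS_def delta_def by (simp del: upt_Suc)

lemma upt_unique: "sorted_wrt (<) r \<Longrightarrow> set r = {1..n} \<Longrightarrow> r = [1..<Suc n]"
proof -
  assume a: "sorted_wrt (<) r" "set r = {1..n}"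
  have "sorted r" "distinct r" using a strict_sorted_iff by auto
  moreover have "sorted [1..<Suc n]" "distinct [1..<Suc n]" by (simp_all del: upt_Suc)
  moreover have "set r = set [1..<Suc n]" using a by (auto simp del: upt_Suc)
  ultimately show ?thesis using sorted_distinct_set_unique by blast
qed

lemma SYT_row: "is_SYT n T \<Longrightarrow> shape T = [n] \<Longrightarrow> T = [[1..<Suc n]]"
proof -
  assume s: "is_SYT n T" and sh: "shape T = [n]"
  then obtain r where T: "T = [r]" unfolding shape_def by (cases T) auto
  have "tabl T" "set (concat T) = {1..n}" using s is_SYT_iff by auto
  then have "sorted_wrt (<) r" "set r = {1..n}" using T by auto
  then have "r = [1..<Suc n]" using upt_unique by blast
  then show ?thesis using T by simp
qed

lemma concat_singles: "concat (map (\<lambda>a. [a]) h) = h"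
  by (induction h) auto

lemma SYT_col: "is_SYT n T \<Longrightarrow> shape T = replicate n 1 \<Longrightarrow> T = map (\<lambda>a. [a]) [1..<Suc n]"
proof -
  assume s: "is_SYT n T" and sh: "shape T = replicate n 1"
  define h where "h = map hd T"
  have m: "map length T = replicate n 1" using sh unfolding shape_def .
  have lT: "length T = n" using arg_cong[OF m, of length] by simp
  have l1: "\<And>i. i < length T \<Longrightarrow> length (T ! i) = 1"
  proof -
    fix i assume i: "i < length T"
    have "map length T ! i = replicate n 1 ! i" using m by simp
    then show "length (T ! i) = 1" using i lT by simp
  qed
  have Th: "T = map (\<lambda>a. [a]) h"
  proof (rule nth_equalityI)
    show "length T = length (map (\<lambda>a. [a]) h)" using h_def by simp
    fix i assume i: "i < length T"
    have "length (T ! i) = 1" using l1[OF i] .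
    then obtain a where "T ! i = [a]" by (cases "T ! i") auto
    then show "T ! i = map (\<lambda>a. [a]) h ! i" using i h_def by simp
  qed
  have t: "tabl T" "distinct (concat T)" "set (concat T) = {1..n}" using s is_SYT_iff by auto
  have ch: "concat T = h" by (subst Th) (rule concat_singles)
  have tr: "transp ((<) :: nat \<Rightarrow> nat \<Rightarrow> bool)" by (auto simp: transp_def)
  have "sorted_wrt (<) h" unfolding sorted_wrt_iff_nth_Suc_transp[OF tr]
  proof (intro allI impI)
    fix i assume i: "Suc i < length h"
    have "rowpair (T ! i) (T ! Suc i)" using t(1) tabl_iff i h_def by simp
    then show "h ! i < h ! Suc i" using i Th by (simp add: rowpair_def)
  qed
  moreover have "set h = {1..n}" using t(3) ch by simp
  ultimately have "h = [1..<Suc n]" by (rule upt_unique)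
  then show ?thesis using Th by simp
qed

lemma iota_perm: "iota n \<in> perms n" unfolding iota_def perms_def by auto
lemma delta_perm: "delta n \<in> perms n" unfolding delta_def perms_def by auto

lemma in_knuth_own: "w \<in> perms n \<Longrightarrow> w \<in> knuth_class n (fst (RS w))"
  unfolding knuth_class_def by (auto intro: prod.collapse[symmetric])

lemma in_knuth_eq: "w \<in> knuth_class n P \<Longrightarrow> fst (RS w) = P"
  unfolding knuth_class_def by auto

lemma len_le_sum: "0 \<notin> set (xs::nat list) \<Longrightarrow> length xs \<le> sum_list xs"
  by (induction xs) auto

lemma partitions_finite: "finite {lam. is_partition n lam}"
proof -
  have "{lam. is_partition n lam} \<subseteq> {xs. set xs \<subseteq> {0..n} \<and> length xs \<le> n}"
  proof
    fix lam assume "lam \<in> {lam. is_partition n lam}"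
    then have a: "0 \<notin> set lam" "sum_list lam = n" unfolding is_partition_def by auto
    have "length lam \<le> n" using len_le_sum[OF a(1)] a(2) by simp
    moreover have "set lam \<subseteq> {0..n}" using member_le_sum_list[of _ lam] a(2) by auto
    ultimately show "lam \<in> {xs. set xs \<subseteq> {0..n} \<and> length xs \<le> n}" by simp
  qed
  then show ?thesis using finite_lists_length_le[of "{0..n}" n] finite_subset by auto
qed

lemma nfold_char: "nfold c {0, c} = {c * k | k. k \<le> c}"
proof
  show "nfold c {0, c} \<subseteq> {c * k | k. k \<le> c}"
  proof
    fix p assume "p \<in> nfold c {0, c}"
    then obtain a where p: "p = (\<Sum>i<c. a i)" and a: "\<forall>i<c. a i \<in> {0, c}"
      unfolding nfold_def sumset_over_def by auto
    have "(\<Sum>i<c. a i) = (\<Sum>i<c. if a i = c then c else 0)"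
      using a by (intro sum.cong) auto
    also have "\<dots> = (\<Sum>i\<in>{i\<in>{..<c}. a i = c}. c)" by (rule sum.inter_filter[symmetric]) simp
    also have "\<dots> = c * card {i\<in>{..<c}. a i = c}" by simp
    finally have "p = c * card {i\<in>{..<c}. a i = c}" using p by simp
    moreover have "card {i\<in>{..<c}. a i = c} \<le> c"
      using card_mono[of "{..<c}" "{i\<in>{..<c}. a i = c}"] by auto
    ultimately show "p \<in> {c * k | k. k \<le> c}" by blast
  qed
next
  show "{c * k | k. k \<le> c} \<subseteq> nfold c {0, c}"
  proof
    fix p assume "p \<in> {c * k | k. k \<le> c}"
    then obtain k where p: "p = c * k" "k \<le> c" by blast
    define a where "a = (\<lambda>i::nat. if i < k then c else 0)"
    have "(\<Sum>i<c. a i) = (\<Sum>i\<in>{i\<in>{..<c}. i < k}. c)" unfolding a_def by (rule sum.inter_filter[symmetric]) simp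
    also have "{i\<in>{..<c}. i < k} = {..<k}" using p(2) by auto
    finally have "(\<Sum>i<c. a i) = p" using p by simp
    moreover have "\<forall>i\<in>{..<c}. a i \<in> {0, c}" unfolding a_def by auto
    ultimately show "p \<in> nfold c {0, c}" unfolding nfold_def sumset_over_def by blast
  qed
qed

lemma card_union_classes:
  assumes "\<forall>P\<in>\<P>. is_SYT n P"
  shows "card (\<Union>P\<in>\<P>. knuth_class n P) = (\<Sum>P\<in>\<P>. flam (shape P))"
proof -
  have "\<P> \<subseteq> {P. is_SYT n P}" using assms by auto
  then have fin: "finite \<P>" using SYT_finite by (rule finite_subset)
  have "card (\<Union>P\<in>\<P>. knuth_class n P) = (\<Sum>P\<in>\<P>. card (knuth_class n P))"
    by (rule card_UN_disjoint[OF fin]) (auto simp: knuth_finite dest: in_knuth_eq)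
  also have "\<dots> = (\<Sum>P\<in>\<P>. flam (shape P))" using assms card_knuth by simp
  finally show ?thesis .
qed



lemma shape_singles: "shape (map (\<lambda>a. [a]) xs) = replicate (length xs) 1"
  by (induction xs) (auto simp: shape_def)

theorem proposition4p6:
  fixes n p :: nat
  shows "(\<exists>S. S \<subseteq> perms n \<and> knuth_closed n S \<and> card S = p \<and>
              iota n \<notin> S \<and> delta n \<notin> S)
         \<longleftrightarrow> p \<in> sumset_over {lam. is_partition n lam \<and> lam \<noteq> replicate n 1 \<and> lam \<noteq> [n]}
                               (\<lambda>lam. nfold (flam lam) {0, flam lam})"
proof -
  define Lam where "Lam = {lam. is_partition n lam \<and> lam \<noteq> replicate n 1 \<and> lam \<noteq> [n]}"
  define Pi where "Pi = fst (RS (iota n))"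
  define Pd where "Pd = fst (RS (delta n))"
  have finL: "finite Lam"
    using partitions_finite[of n] by (rule finite_subset[rotated]) (auto simp: Lam_def)
  have Pi_sh: "shape Pi \<notin> Lam"
  proof (cases "n = 0")
    case True
    then have "Pi = []" by (simp add: Pi_def iota_def RS_Nil)
    then show ?thesis using True by (simp add: Lam_def shape_def)
  next
    case False
    then have "Pi = [[1..<Suc n]]" using RS_iota Pi_def by simp
    then show ?thesis by (simp add: Lam_def shape_def del: upt_Suc)
  qed
  have Pd_eq: "Pd = map (\<lambda>a. [a]) [1..<Suc n]" using RS_delta Pd_def by simp
  have Pd_sh: "shape Pd \<notin> Lam" unfolding Pd_eq shape_singles by (simp add: Lam_def del: upt_Suc)
  have other: "\<And>T. is_SYT n T \<Longrightarrow> shape T \<notin> Lam \<Longrightarrow> T = Pi \<or> T = Pd"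
  proof -
    fix T assume T: "is_SYT n T" "shape T \<notin> Lam"
    have ip: "is_partition n (shape T)" using T(1) is_SYT_def by simp
    then have "shape T = replicate n 1 \<or> shape T = [n]" using T(2) Lam_def by auto
    then show "T = Pi \<or> T = Pd"
    proof
      assume "shape T = replicate n 1"
      then have "T = Pd" using SYT_col T(1) Pd_eq by simp
      then show ?thesis by simp
    next
      assume s: "shape T = [n]"
      then have "n \<noteq> 0" using ip by (auto simp: is_partition_def)
      then have "Pi = [[1..<Suc n]]" using RS_iota Pi_def by simp
      then have "T = Pi" using SYT_row T(1) s by simp
      then show ?thesis by simp
    qed
  qed
  have iK: "iota n \<in> knuth_class n Pi" using in_knuth_own[OF iota_perm] Pi_def by simp
  have dK: "delta n \<in> knuth_class n Pd" using in_knuth_own[OF delta_perm] Pd_def by simp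
  have Ysh: "\<And>lam. lam \<in> Lam \<Longrightarrow> flam lam = card {T. is_SYT n T \<and> shape T = lam}"
    by (simp add: flam_def Lam_def is_partition_def)
  have finY: "\<And>lam. finite {T. is_SYT n T \<and> shape T = lam}"
    using SYT_finite by (rule finite_subset[rotated]) auto
  have "(\<exists>S. S \<subseteq> perms n \<and> knuth_closed n S \<and> card S = p \<and> iota n \<notin> S \<and> delta n \<notin> S)
        \<longleftrightarrow> p \<in> sumset_over Lam (\<lambda>lam. nfold (flam lam) {0, flam lam})"
  proof
    assume "\<exists>S. S \<subseteq> perms n \<and> knuth_closed n S \<and> card S = p \<and> iota n \<notin> S \<and> delta n \<notin> S"
    then obtain S \<P> where S: "S \<subseteq> perms n" "card S = p" "iota n \<notin> S" "delta n \<notin> S"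
      and P: "\<forall>P\<in>\<P>. is_SYT n P" "S = (\<Union>P\<in>\<P>. knuth_class n P)"
      unfolding knuth_closed_def by blast
    have "\<P> \<subseteq> {P. is_SYT n P}" using P(1) by auto
    then have finP: "finite \<P>" using SYT_finite by (rule finite_subset)
    have "Pi \<notin> \<P>" using iK S(3) P(2) by blast
    moreover have "Pd \<notin> \<P>" using dK S(4) P(2) by blast
    ultimately have shL: "shape ` \<P> \<subseteq> Lam" using other P(1) by blast
    have "p = (\<Sum>P\<in>\<P>. flam (shape P))" using card_union_classes[OF P(1)] S(2) P(2) by simp
    also have "\<dots> = (\<Sum>lam\<in>Lam. \<Sum>P\<in>{P\<in>\<P>. shape P = lam}. flam (shape P))"
      using sum.group[OF finP finL shL, of "\<lambda>P. flam (shape P)"] by simp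
    also have "\<dots> = (\<Sum>lam\<in>Lam. flam lam * card {P\<in>\<P>. shape P = lam})"
    proof (intro sum.cong refl)
      fix lam assume "lam \<in> Lam"
      have "(\<Sum>P\<in>{P\<in>\<P>. shape P = lam}. flam (shape P)) = (\<Sum>P\<in>{P\<in>\<P>. shape P = lam}. flam lam)"
        by (rule sum.cong) auto
      then show "(\<Sum>P\<in>{P\<in>\<P>. shape P = lam}. flam (shape P)) = flam lam * card {P\<in>\<P>. shape P = lam}"
        by simp
    qed
    finally have pe: "p = (\<Sum>lam\<in>Lam. flam lam * card {P\<in>\<P>. shape P = lam})" .
    have "\<forall>lam\<in>Lam. flam lam * card {P\<in>\<P>. shape P = lam} \<in> nfold (flam lam) {0, flam lam}"
    proof
      fix lam assume l: "lam \<in> Lam"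
      have "{P\<in>\<P>. shape P = lam} \<subseteq> {T. is_SYT n T \<and> shape T = lam}" using P(1) by auto
      then have "card {P\<in>\<P>. shape P = lam} \<le> flam lam" using card_mono[OF finY] Ysh[OF l] by simp
      then show "flam lam * card {P\<in>\<P>. shape P = lam} \<in> nfold (flam lam) {0, flam lam}"
        unfolding nfold_char by blast
    qed
    then show "p \<in> sumset_over Lam (\<lambda>lam. nfold (flam lam) {0, flam lam})"
      unfolding sumset_over_def using pe by blast
  next
    assume "p \<in> sumset_over Lam (\<lambda>lam. nfold (flam lam) {0, flam lam})"
    then obtain a where p: "p = (\<Sum>lam\<in>Lam. a lam)"
      and a: "\<forall>lam\<in>Lam. a lam \<in> nfold (flam lam) {0, flam lam}"
      unfolding sumset_over_def by blast
    have "\<forall>lam\<in>Lam. \<exists>X. X \<subseteq> {T. is_SYT n T \<and> shape T = lam} \<and> flam lam * card X = a lam"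
    proof
      fix lam assume l: "lam \<in> Lam"
      then obtain k where k: "a lam = flam lam * k" "k \<le> flam lam" using a nfold_char by blast
      then have "k \<le> card {T. is_SYT n T \<and> shape T = lam}" using Ysh[OF l] by simp
      then obtain X where "X \<subseteq> {T. is_SYT n T \<and> shape T = lam}" "card X = k"
        by (rule obtain_subset_with_card_n)
      then show "\<exists>X. X \<subseteq> {T. is_SYT n T \<and> shape T = lam} \<and> flam lam * card X = a lam"
        using k by auto
    qed
    then obtain F where F: "\<forall>lam\<in>Lam. F lam \<subseteq> {T. is_SYT n T \<and> shape T = lam} \<and> flam lam * card (F lam) = a lam"
      using bchoice by metis
    define \<P> where "\<P> = (\<Union>lam\<in>Lam. F lam)"
    define S where "S = (\<Union>P\<in>\<P>. knuth_class n P)"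
    have P1: "\<forall>P\<in>\<P>. is_SYT n P" using F \<P>_def by blast
    have S1: "S \<subseteq> perms n" unfolding S_def knuth_class_def by auto
    have S2: "knuth_closed n S" unfolding knuth_closed_def S_def using P1 by blast
    have shP: "\<And>P. P \<in> \<P> \<Longrightarrow> shape P \<in> Lam" using F \<P>_def by blast
    have S3: "iota n \<notin> S"
    proof
      assume "iota n \<in> S"
      then obtain P where "P \<in> \<P>" "iota n \<in> knuth_class n P" unfolding S_def by blast
      then show False using in_knuth_eq Pi_def shP Pi_sh by metis
    qed
    have S4: "delta n \<notin> S"
    proof
      assume "delta n \<in> S"
      then obtain P where "P \<in> \<P>" "delta n \<in> knuth_class n P" unfolding S_def by blast
      then show False using in_knuth_eq Pd_def shP Pd_sh by metis
    qed
    have finF: "\<forall>lam\<in>Lam. finite (F lam)" using F finY finite_subset by metis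
    have disj: "\<forall>l1\<in>Lam. \<forall>l2\<in>Lam. l1 \<noteq> l2 \<longrightarrow> F l1 \<inter> F l2 = {}" using F by blast
    have "card S = (\<Sum>P\<in>\<P>. flam (shape P))" using card_union_classes[OF P1] S_def by simp
    also have "\<dots> = (\<Sum>lam\<in>Lam. \<Sum>P\<in>F lam. flam (shape P))"
      unfolding \<P>_def by (rule sum.UNION_disjoint[OF finL finF disj])
    also have "\<dots> = (\<Sum>lam\<in>Lam. a lam)"
    proof (intro sum.cong refl)
      fix lam assume l: "lam \<in> Lam"
      have "(\<Sum>P\<in>F lam. flam (shape P)) = (\<Sum>P\<in>F lam. flam lam)"
        using F l by (intro sum.cong) auto
      then show "(\<Sum>P\<in>F lam. flam (shape P)) = a lam" using F l by (simp add: mult.commute)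
    qed
    finally have "card S = p" using p by simp
    then show "\<exists>S. S \<subseteq> perms n \<and> knuth_closed n S \<and> card S = p \<and> iota n \<notin> S \<and> delta n \<notin> S"
      using S1 S2 S3 S4 by blast
  qed
  then show ?thesis unfolding Lam_def .
qed

end
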